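(* Let $n\ge2$ and $0\le r_l\le r_u<1$. For all $x,y\in\mathbb{B}^n$ with $r_l\le|x|\le|y|\le r_u$, $$\frac{1+r_l}{\sqrt{5+2r_l+r_l^2}}\,\mathrm{th}\frac{\rho_{\mathbb{B}^n}(x,y)}{2}\le w_{\mathbb{B}^n}(x,y)\le s_{\mathbb{B}^n}(x,y)\le\frac{1+r_u^2}{2\sqrt{1-2r_u+2r_u^2}}\,\mathrm{th}\frac{\rho_{\mathbb{B}^n}(x,y)}{2}.$$
   Context: $\mathbb{B}^n$ is the unit ball of $\mathbb{R}^n$; $S^{n-1}(x,r)$ is the Euclidean sphere of center $x$ and radius $r$. For a domain $G\subsetneq\mathbb{R}^n$ and $x\in G$, $d_G(x)=\inf\{|x-z|:z\in\partial G\}$. The hyperbolic metric of the unit ball satisfies $\mathrm{th}\frac{\rho_{\mathbb{B}^n}(x,y)}{2}=\frac{|x-y|}{\sqrt{|x-y|^2+(1-|x|^2)(1-|y|^2)}}$. The triangular ratio metric is $s_G(x,y)=\frac{|x-y|}{\inf_{z\in\partial G}(|x-z|+|z-y|)}$. For a convex domain $G$, the $w$-quasi-metric is $w_G(x,y)=\frac{|x-y|}{\min\{\inf_{\tilde y\in\tilde Y}|x-\tilde y|,\ \inf_{\tilde x\in\tilde X}|y-\tilde x|\}}$, where $\tilde X=\{\tilde x\in S^{n-1}(x,2d_G(x)):(x+\tilde x)/2\in\partial G\}$ and $\tilde Y=\{\tilde y\in S^{n-1}(y,2d_G(y)):(y+\tilde y)/2\in\partial G\}$. *)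

theory Defs
  imports "HOL-Analysis.Analysis"
begin

definition rho_ball :: "'a::euclidean_space \<Rightarrow> 'a \<Rightarrow> real" where
  "rho_ball x y = 2 * artanh (dist x y /
      sqrt ((dist x y)\<^sup>2 + (1 - (norm x)\<^sup>2) * (1 - (norm y)\<^sup>2)))"

definition dG :: "'a::euclidean_space set \<Rightarrow> 'a \<Rightarrow> real" where
  "dG G x = Inf {dist x z | z. z \<in> frontier G}"

definition s_metric :: "'a::euclidean_space set \<Rightarrow> 'a \<Rightarrow> 'a \<Rightarrow> real" where
  "s_metric G x y = dist x y / Inf {dist x z + dist z y | z. z \<in> frontier G}"

definition refl_set :: "'a::euclidean_space set \<Rightarrow> 'a \<Rightarrow> 'a set" where
  "refl_set G x = {xt \<in> sphere x (2 * dG G x). (x + xt) /\<^sub>R 2 \<in> frontier G}"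

definition w_metric :: "'a::euclidean_space set \<Rightarrow> 'a \<Rightarrow> 'a \<Rightarrow> real" where
  "w_metric G x y = dist x y /
     min (Inf {dist x yt | yt. yt \<in> refl_set G y}) (Inf {dist y xt | xt. xt \<in> refl_set G x})"

end

theory Submission
  imports Defs
begin

lemma tanh_artanh_real:
  fixes q :: real assumes "-1 < q" "q < 1"
  shows "tanh (artanh q) = q"
proof -
  have w: "(1+q)/(1-q) > 0" using assms by simp
  have e: "exp (- 2 * artanh q) = (1-q)/(1+q)"
    using w assms by (simp add: artanh_def exp_minus)
  have "tanh (artanh q) = (1 - (1-q)/(1+q)) / (1 + (1-q)/(1+q))"
    unfolding tanh_real_altdef e ..
  also have "\<dots> = q" using assms by (simp add: field_simps)
  finally show ?thesis .
qed

lemma norm_sR_diff_sq: fixes x y :: "'a::real_inner"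
  shows "(norm (c *\<^sub>R y - x))\<^sup>2 = c\<^sup>2 * (norm y)\<^sup>2 - 2 * c * inner x y + (norm x)\<^sup>2"
  by (simp only: power2_norm_eq_inner) (simp add: inner_diff_left inner_diff_right inner_commute algebra_simps power2_eq_square)

definition Aof :: "'a::euclidean_space \<Rightarrow> 'a \<Rightarrow> real" where
  "Aof x y = sqrt ((dist x y)\<^sup>2 + (1 - (norm x)\<^sup>2) * (1 - (norm y)\<^sup>2))"

lemma Aof_sq: "norm x < 1 \<Longrightarrow> norm y < 1 \<Longrightarrow> (Aof x y)\<^sup>2 = 1 + (norm x)\<^sup>2 * (norm y)\<^sup>2 - 2 * inner x y"
proof -
  assume h: "norm x < 1" "norm y < 1"
  have p: "(1 - (norm x)\<^sup>2) * (1 - (norm y)\<^sup>2) \<ge> 0"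
    using h by (simp add: abs_square_less_1 less_imp_le)
  have d: "(dist x y)\<^sup>2 = (norm x)\<^sup>2 + (norm y)\<^sup>2 - 2 * inner x y"
    using norm_sR_diff_sq[of 1 y x] by (simp add: dist_norm norm_minus_commute inner_commute)
  have "(Aof x y)\<^sup>2 = (dist x y)\<^sup>2 + (1 - (norm x)\<^sup>2) * (1 - (norm y)\<^sup>2)"
    unfolding Aof_def using p by (simp add: add_nonneg_nonneg)
  also have "\<dots> = 1 + (norm x)\<^sup>2 * (norm y)\<^sup>2 - 2 * inner x y"
    unfolding d by (simp add: algebra_simps)
  finally show ?thesis .
qed

lemma Aof_pos: "norm x < 1 \<Longrightarrow> norm y < 1 \<Longrightarrow> Aof x y > 0"
proof -
  assume h: "norm x < 1" "norm y < 1"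
  have p: "(1 - (norm x)\<^sup>2) * (1 - (norm y)\<^sup>2) > 0"
    using h by (simp add: abs_square_less_1)
  then show ?thesis unfolding Aof_def by (simp add: add_nonneg_pos)
qed

lemma Aof_sym: "Aof x y = Aof y x"
  unfolding Aof_def by (simp add: dist_commute mult.commute)

lemma dist_lt_Aof: "norm x < 1 \<Longrightarrow> norm y < 1 \<Longrightarrow> dist x y < Aof x y"
proof -
  assume h: "norm x < 1" "norm y < 1"
  have p: "(1 - (norm x)\<^sup>2) * (1 - (norm y)\<^sup>2) > 0"
    using h by (simp add: abs_square_less_1)
  have "sqrt ((dist x y)\<^sup>2) < Aof x y" unfolding Aof_def
    using p by (subst real_sqrt_less_iff) simp
  then show ?thesis by simp
qed

lemma tanh_rho: "norm x < 1 \<Longrightarrow> norm y < 1 \<Longrightarrow> tanh (rho_ball x y / 2) = dist x y / Aof x y"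
proof -
  assume h: "norm x < 1" "norm y < 1"
  have "dist x y / Aof x y < 1" using dist_lt_Aof[OF h] Aof_pos[OF h] by simp
  moreover have "dist x y / Aof x y \<ge> 0" using Aof_pos[OF h] by simp
  ultimately show ?thesis unfolding rho_ball_def Aof_def[symmetric]
    by (simp add: tanh_artanh_real)
qed

lemma Aof_le: fixes x y z :: "'a::euclidean_space"
  assumes "norm x < 1" "norm y < 1" "norm z = 1"
  shows "Aof x y \<le> dist x z + norm x * dist z y"
proof (cases "x = 0")
  case True
  then have "(Aof x y)\<^sup>2 = 1" using Aof_sq[OF assms(1,2)] by simp
  then have "Aof x y = 1" using Aof_pos[OF assms(1,2)]
    by (simp add: power2_eq_1_iff)
  then show ?thesis using True assms(3) by simp
next
  case False
  define a where "a = norm x"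
  have a: "a > 0" using False a_def by simp
  have e1: "(norm (a\<^sup>2 *\<^sub>R y - x))\<^sup>2 = (a * Aof x y)\<^sup>2"
    unfolding power_mult_distrib Aof_sq[OF assms(1,2)] norm_sR_diff_sq a_def
    by (simp add: algebra_simps power2_eq_square)
  have e2: "(norm (a\<^sup>2 *\<^sub>R z - x))\<^sup>2 = (a * dist x z)\<^sup>2"
  proof -
    have h: "(dist x z)\<^sup>2 = 1 - 2 * inner x z + a\<^sup>2"
      using norm_sR_diff_sq[of 1 z x] assms(3) by (simp add: dist_norm norm_minus_commute a_def)
    show ?thesis
      by (simp only: power_mult_distrib norm_sR_diff_sq h assms(3)) (simp add: a_def algebra_simps power2_eq_square)
  qed
  have n1: "norm (a\<^sup>2 *\<^sub>R y - x) = a * Aof x y"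
    using e1 a Aof_pos[OF assms(1,2)] by (simp add: power2_eq_iff_nonneg)
  have n2: "norm (a\<^sup>2 *\<^sub>R z - x) = a * dist x z"
    using e2 a by (simp add: power2_eq_iff_nonneg)
  have "a\<^sup>2 *\<^sub>R y - x = a\<^sup>2 *\<^sub>R (y - z) + (a\<^sup>2 *\<^sub>R z - x)" by (simp add: algebra_simps)
  then have "norm (a\<^sup>2 *\<^sub>R y - x) \<le> norm (a\<^sup>2 *\<^sub>R (y - z)) + norm (a\<^sup>2 *\<^sub>R z - x)"
    by (metis norm_triangle_ineq)
  also have "norm (a\<^sup>2 *\<^sub>R (y - z)) = a\<^sup>2 * dist z y"
    by (simp add: dist_norm norm_minus_commute)
  finally have "a * Aof x y \<le> a * (a * dist z y + dist x z)"
    using n1 n2 by (simp add: algebra_simps power2_eq_square)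
  then have "Aof x y \<le> a * dist z y + dist x z" using a by simp
  then show ?thesis by (simp add: a_def)
qed

lemma poly_low:
  fixes rl a b t :: real
  assumes "0 \<le> rl" "rl \<le> a" "a \<le> b" "b < 1" "-1 \<le> t" "t \<le> 1"
  shows "(1+rl)\<^sup>2 * (a\<^sup>2 + (2-b)\<^sup>2 - 2*a*(2-b)*t) \<le> (5+2*rl+rl\<^sup>2) * (1 + a\<^sup>2*b\<^sup>2 - 2*a*b*t)"
proof -
  define K where "K = 5+2*rl+rl\<^sup>2"
  have K4: "4 \<le> K" using assms unfolding K_def by (simp add: add_nonneg_nonneg)
  have m1: "(1-a)*(1-b) \<le> (1-rl)*(1-b)" using assms by (intro mult_right_mono) auto
  have m2: "(1-a)*(1-b) \<le> (1-a)*(1-rl)" using assms by (intro mult_left_mono) auto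
  have l1: "(1+rl)*(2-a-b) \<le> 2*(1-a*b)" using m1 m2 by (simp add: algebra_simps)
  have l1p: "0 \<le> (1+rl)*(2-a-b)" using assms by simp
  have "((1+rl)*(2-a-b))\<^sup>2 \<le> (2*(1-a*b))\<^sup>2" using l1 l1p by (rule power_mono)
  also have "\<dots> = 4 * (1-a*b)\<^sup>2" by algebra
  also have "\<dots> \<le> K * (1-a*b)\<^sup>2" using K4 by (intro mult_right_mono) auto
  finally have g1: "(1+rl)\<^sup>2*(2-a-b)\<^sup>2 \<le> K*(1-a*b)\<^sup>2" by (simp add: power_mult_distrib)
  have l2: "(1+rl)*(2+a-b) \<le> (1+rl)*2" using assms by (intro mult_left_mono) auto
  then have l2: "(1+rl)*(2+a-b) \<le> 2*(1+rl)" by (simp add: mult.commute)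
  have l2p: "0 \<le> (1+rl)*(2+a-b)" using assms by simp
  have "((1+rl)*(2+a-b))\<^sup>2 \<le> (2*(1+rl))\<^sup>2" using l2 l2p by (rule power_mono)
  also have "\<dots> = K*(1+rl\<^sup>2)\<^sup>2 - (rl^3+rl\<^sup>2+3*rl-1)\<^sup>2" unfolding K_def by algebra
  also have "\<dots> \<le> K*(1+rl\<^sup>2)\<^sup>2" by simp
  also have "\<dots> \<le> K*(1+a*b)\<^sup>2"
  proof -
    have "rl*rl \<le> a*b" using assms by (intro mult_mono) auto
    then have "(1+rl\<^sup>2)\<^sup>2 \<le> (1+a*b)\<^sup>2" by (intro power_mono) (auto simp: power2_eq_square)
    then show ?thesis using K4 by (intro mult_left_mono) auto
  qed
  finally have g2: "(1+rl)\<^sup>2*(2+a-b)\<^sup>2 \<le> K*(1+a*b)\<^sup>2" by (simp add: power_mult_distrib)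
  have E: "2*(K * (1 + a\<^sup>2*b\<^sup>2 - 2*a*b*t) - (1+rl)\<^sup>2 * (a\<^sup>2 + (2-b)\<^sup>2 - 2*a*(2-b)*t))
     = (1+t)*(K*(1-a*b)\<^sup>2 - (1+rl)\<^sup>2*(2-a-b)\<^sup>2) + (1-t)*(K*(1+a*b)\<^sup>2 - (1+rl)\<^sup>2*(2+a-b)\<^sup>2)"
    by algebra
  have "0 \<le> (1+t)*(K*(1-a*b)\<^sup>2 - (1+rl)\<^sup>2*(2-a-b)\<^sup>2) + (1-t)*(K*(1+a*b)\<^sup>2 - (1+rl)\<^sup>2*(2+a-b)\<^sup>2)"
  proof (rule add_nonneg_nonneg)
    show "0 \<le> (1+t)*(K*(1-a*b)\<^sup>2 - (1+rl)\<^sup>2*(2-a-b)\<^sup>2)"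
      using g1 assms by (intro mult_nonneg_nonneg) auto
    show "0 \<le> (1-t)*(K*(1+a*b)\<^sup>2 - (1+rl)\<^sup>2*(2+a-b)\<^sup>2)"
      using g2 assms by (intro mult_nonneg_nonneg) auto
  qed
  then have "0 \<le> 2*(K * (1 + a\<^sup>2*b\<^sup>2 - 2*a*b*t) - (1+rl)\<^sup>2 * (a\<^sup>2 + (2-b)\<^sup>2 - 2*a*(2-b)*t))"
    by (subst E)
  then have "0 \<le> K * (1 + a\<^sup>2*b\<^sup>2 - 2*a*b*t) - (1+rl)\<^sup>2 * (a\<^sup>2 + (2-b)\<^sup>2 - 2*a*(2-b)*t)"
    by (rule zero_le_mult_iff[THEN iffD1, THEN disjE]) auto
  then show ?thesis unfolding K_def by (simp only: diff_ge_0_iff_ge)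
qed

lemma poly_up:
  fixes r :: real assumes "0 \<le> r" "r < 1"
  shows "(1 + r) / 2 \<le> (1 + r\<^sup>2) / (2 * sqrt (1 - 2 * r + 2 * r\<^sup>2))"
proof -
  have q: "1 - 2 * r + 2 * r\<^sup>2 > 0"
  proof -
    have "1 - 2 * r + 2 * r\<^sup>2 = (1-r)\<^sup>2 + r\<^sup>2" by algebra
    moreover have "(1-r)\<^sup>2 > 0" using assms by simp
    moreover have "r\<^sup>2 \<ge> 0" by simp
    ultimately show ?thesis by linarith
  qed
  have "((1+r) * sqrt (1 - 2 * r + 2 * r\<^sup>2))\<^sup>2 = (1 + r\<^sup>2)\<^sup>2 - r\<^sup>2*(1-r)*(3+r)"
    using q by (simp add: power_mult_distrib) algebra
  also have "\<dots> \<le> (1 + r\<^sup>2)\<^sup>2" using assms by simp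
  finally have "(1+r) * sqrt (1 - 2 * r + 2 * r\<^sup>2) \<le> 1 + r\<^sup>2"
    by (rule power2_le_imp_le) simp
  then show ?thesis using q by (simp add: field_simps)
qed

lemma unit_dir: "\<exists>m::'a::euclidean_space. norm m = 1 \<and> y = norm y *\<^sub>R m"
proof (cases "y = 0")
  case True
  obtain e :: 'a where "e \<in> Basis" using nonempty_Basis by blast
  then show ?thesis using True by (intro exI[of _ e]) auto
next
  case False
  then show ?thesis by (intro exI[of _ "y /\<^sub>R norm y"]) auto
qed

lemma dG_ball: fixes y :: "'a::euclidean_space" assumes "norm y < 1"
  shows "dG (ball 0 1) y = 1 - norm y"
proof -
  obtain m where m: "norm m = 1" "y = norm y *\<^sub>R m" using unit_dir by blast
  have "dist y m = norm ((1 - norm y) *\<^sub>R m)"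
    by (subst m(2)) (simp add: dist_norm algebra_simps norm_minus_commute)
  also have "\<dots> = 1 - norm y" using m(1) assms by simp
  finally have dm: "dist y m = 1 - norm y" .
  show ?thesis unfolding dG_def frontier_ball[OF zero_less_one]
  proof (rule cInf_eq_minimum)
    show "1 - norm y \<in> {dist y z |z. z \<in> sphere 0 1}" using dm m(1) by force
  next
    fix d assume "d \<in> {dist y z |z. z \<in> sphere (0::'a) 1}"
    then obtain z :: 'a where "d = dist y z" "norm z = 1" by auto
    then show "1 - norm y \<le> d" using norm_triangle_ineq2[of z y]
      by (simp add: dist_norm norm_minus_commute)
  qed
qed

lemma refl_char: fixes y yt :: "'a::euclidean_space"
  assumes "norm y < 1" "yt \<in> refl_set (ball 0 1) y"
  shows "\<exists>m. norm m = 1 \<and> y = norm y *\<^sub>R m \<and> yt = 2 *\<^sub>R m - y"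
proof -
  define m where "m = (y + yt) /\<^sub>R 2"
  define b where "b = norm y"
  have nm: "norm m = 1" and dyt: "dist y yt = 2 * (1 - b)"
    using assms unfolding refl_set_def dG_ball[OF assms(1)] frontier_ball[OF zero_less_one] m_def b_def
    by auto
  have yt: "yt = 2 *\<^sub>R m - y" unfolding m_def by (simp add: algebra_simps)
  have "2 *\<^sub>R (m - y) = yt - y" unfolding m_def by (simp add: algebra_simps scaleR_2)
  then have "2 * norm (m - y) = dist y yt" by (metis dist_norm norm_minus_commute norm_scaleR abs_numeral)
  then have "norm (m - y) = 1 - b" using dyt by simp
  then have "(norm (1 *\<^sub>R m - y))\<^sup>2 = (1-b)\<^sup>2" by simp
  then have "1 - 2 * inner y m + b\<^sup>2 = (1-b)\<^sup>2" unfolding norm_sR_diff_sq nm b_def by simp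
  then have ym: "inner y m = b" by (simp add: algebra_simps power2_eq_square)
  have "(norm (b *\<^sub>R m - y))\<^sup>2 = 0" unfolding norm_sR_diff_sq nm ym b_def
    by (simp add: power2_eq_square)
  then have "y = b *\<^sub>R m" by simp
  then have "y = norm y *\<^sub>R m" by (simp add: b_def)
  then show ?thesis using nm yt by blast
qed

lemma refl_mem: fixes y m :: "'a::euclidean_space"
  assumes "norm m = 1" "y = norm y *\<^sub>R m" "norm y < 1"
  shows "2 *\<^sub>R m - y \<in> refl_set (ball 0 1) y"
proof -
  define b where "b = norm y"
  have hy: "y = b *\<^sub>R m" using assms(2) b_def by simp
  have "y - (2 *\<^sub>R m - y) = (2 * (b - 1)) *\<^sub>R m" unfolding hy by (simp add: algebra_simps scaleR_2) (metis scaleR_2 scaleR_scaleR mult.commute)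
  then have "dist y (2 *\<^sub>R m - y) = 2 * (1 - norm y)" using assms(1,3) unfolding dist_norm
    by (simp add: b_def)
  then show ?thesis unfolding refl_set_def dG_ball[OF assms(3)] frontier_ball[OF zero_less_one]
    using assms(1) by (simp add: algebra_simps)
qed

lemma seg_lemma: fixes p q m :: "'a::euclidean_space"
  assumes "norm p < 1" "norm m = 1" "q = norm q *\<^sub>R m" "norm q < 1"
  shows "\<exists>z. norm z = 1 \<and> dist p z + dist z q \<le> dist p (2 *\<^sub>R m - q)"
proof -
  define b where "b = norm q"
  define qt where "qt = 2 *\<^sub>R m - q"
  have hq: "q = b *\<^sub>R m" using assms(3) b_def by simp
  have qt2: "qt = (2 - b) *\<^sub>R m" unfolding qt_def hq by (simp add: algebra_simps)
  have nqt: "norm qt = 2 - b" unfolding qt2 using assms b_def by simp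
  define f where "f s = norm (p + s *\<^sub>R (qt - p))" for s :: real
  have "continuous_on {0..1} f" unfolding f_def by (intro continuous_intros)
  moreover have "f 0 \<le> 1" "1 \<le> f 1" using assms nqt b_def unfolding f_def by auto
  ultimately obtain s where s: "0 \<le> s" "s \<le> 1" "f s = 1"
    using IVT'[of f 0 1 1] by auto
  define z where "z = p + s *\<^sub>R (qt - p)"
  have nz: "norm z = 1" using s unfolding z_def f_def by simp
  have d1: "dist p z = s * dist p qt" unfolding z_def using s
    by (simp add: dist_norm norm_minus_commute)
  have "dist z qt = norm ((1 - s) *\<^sub>R (p - qt))" unfolding z_def dist_norm
    by (simp add: algebra_simps)
  also have "\<dots> = (1-s) * dist p qt" using s by (simp add: dist_norm)
  finally have d2: "dist z qt = (1-s) * dist p qt" .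
  have zm: "inner z m \<le> 1" using Cauchy_Schwarz_ineq2[of z m] nz assms(2) by simp
  have qm: "inner q m = b" using assms(2) unfolding hq by (simp add: power2_eq_square[symmetric] power2_norm_eq_inner[symmetric])
  have "z - qt = (z - q) - (2*(1-b)) *\<^sub>R m" unfolding qt2 hq by (simp add: algebra_simps) (metis scaleR_2 scaleR_scaleR mult.commute)
  then have "(norm (z - qt))\<^sup>2 = (norm ((2*(1-b)) *\<^sub>R m - (z - q)))\<^sup>2" by (metis norm_minus_commute)
  also have "\<dots> = (2*(1-b))\<^sup>2 - 2*(2*(1-b))*(inner z m - b) + (norm (z-q))\<^sup>2"
    unfolding norm_sR_diff_sq assms(2) by (simp add: inner_diff_left qm)
  also have "\<dots> = (norm (z-q))\<^sup>2 + 4*(1-b)*(1 - inner z m)" by algebra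
  also have "\<dots> \<ge> (norm (z-q))\<^sup>2" using zm assms(4) b_def by simp
  finally have "norm (z - q) \<le> norm (z - qt)" by (rule power2_le_imp_le) simp
  then have "dist z q \<le> dist z qt" by (simp add: dist_norm)
  then have "dist p z + dist z q \<le> dist p qt" using d1 d2 by (simp add: algebra_simps)
  then show ?thesis using nz unfolding qt_def by blast
qed

theorem corollary3p8:
  fixes x y :: "'a::euclidean_space" and rl ru :: real
  assumes "DIM('a) \<ge> 2"
    and "0 \<le> rl" and "rl \<le> ru" and "ru < 1"
    and "x \<in> ball 0 1" and "y \<in> ball 0 1"
    and "rl \<le> norm x" and "norm x \<le> norm y" and "norm y \<le> ru"
  shows "(1 + rl) / sqrt (5 + 2 * rl + rl\<^sup>2) * tanh (rho_ball x y / 2) \<le> w_metric (ball 0 1) x y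
    \<and> w_metric (ball 0 1) x y \<le> s_metric (ball 0 1) x y
    \<and> s_metric (ball 0 1) x y \<le> (1 + ru\<^sup>2) / (2 * sqrt (1 - 2 * ru + 2 * ru\<^sup>2)) * tanh (rho_ball x y / 2)"
proof -
  have nx: "norm x < 1" and ny: "norm y < 1" using assms(5,6) by auto
  define a where "a = norm x"
  define b where "b = norm y"
  define d where "d = dist x y"
  define A where "A = Aof x y"
  have Apos: "A > 0" using Aof_pos[OF nx ny] A_def by simp
  have th: "tanh (rho_ball x y / 2) = d / A" using tanh_rho[OF nx ny] A_def d_def by simp
  define S where "S = {dist x z + dist z y | z. z \<in> sphere (0::'a) 1}"
  define R1 where "R1 = {dist x yt | yt. yt \<in> refl_set (ball 0 1) y}"
  define R2 where "R2 = {dist y xt | xt. xt \<in> refl_set (ball 0 1) x}"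
  have sdef: "s_metric (ball 0 1) x y = d / Inf S"
    unfolding s_metric_def S_def d_def frontier_ball[OF zero_less_one] by simp
  have wdef: "w_metric (ball 0 1) x y = d / min (Inf R1) (Inf R2)"
    unfolding w_metric_def R1_def R2_def d_def by simp
  have Sne: "S \<noteq> {}"
  proof -
    obtain m :: 'a where "norm m = 1" using unit_dir[of "0::'a"] by (metis nonempty_Basis ex_in_conv norm_Basis)
    then show ?thesis unfolding S_def by auto
  qed
  have Sbdd: "bdd_below S" unfolding S_def by (rule bdd_belowI[of _ 0]) auto
  have Slow: "2 * A / (1 + ru) \<le> s" if hs: "s \<in> S" for s
  proof -
    obtain z :: 'a where z: "norm z = 1" "s = dist x z + dist z y" using hs unfolding S_def by auto
    have h1: "A \<le> dist x z + a * dist z y" using Aof_le[OF nx ny z(1)] A_def a_def by simp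
    have h2: "A \<le> dist y z + b * dist z x" using Aof_le[OF ny nx z(1)] A_def b_def Aof_sym[of x y] by simp
    have "(1 + b) * dist x z \<le> (1 + ru) * dist x z" using assms b_def by (intro mult_right_mono) auto
    moreover have "(1 + a) * dist z y \<le> (1 + ru) * dist z y" using assms a_def b_def by (intro mult_right_mono) auto
    ultimately have "2 * A \<le> (1 + ru) * s" using h1 h2 z(2)
      by (simp add: dist_commute algebra_simps)
    then show ?thesis using assms by (simp add: field_simps)
  qed
  have posS: "0 < 2 * A / (1 + ru)" using Apos assms by simp
  have InfS: "2 * A / (1 + ru) \<le> Inf S" using Sne Slow by (intro cInf_greatest) auto
  have InfSpos: "Inf S > 0" using posS InfS by linarith
  have R1ne: "R1 \<noteq> {}"
  proof -
    obtain m where "norm m = 1" "y = norm y *\<^sub>R m" using unit_dir by blast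
    then show ?thesis using refl_mem[OF _ _ ny] unfolding R1_def by blast
  qed
  have R2ne: "R2 \<noteq> {}"
  proof -
    obtain m where "norm m = 1" "x = norm x *\<^sub>R m" using unit_dir by blast
    then show ?thesis using refl_mem[OF _ _ nx] unfolding R2_def by blast
  qed
  have R1b: "Inf S \<le> r" if hr: "r \<in> R1" for r
  proof -
    obtain yt where yt: "r = dist x yt" "yt \<in> refl_set (ball 0 1) y" using hr R1_def by auto
    obtain m where m: "norm m = 1" "y = norm y *\<^sub>R m" "yt = 2 *\<^sub>R m - y"
      using refl_char[OF ny yt(2)] by blast
    obtain z where z: "norm z = 1" "dist x z + dist z y \<le> dist x (2 *\<^sub>R m - y)"
      using seg_lemma[OF nx m(1) m(2) ny] by blast
    have "Inf S \<le> dist x z + dist z y" using z(1) Sbdd unfolding S_def by (intro cInf_lower) auto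
    then show ?thesis using z(2) yt(1) m(3) by simp
  qed
  have R2b: "Inf S \<le> r" if hr: "r \<in> R2" for r
  proof -
    obtain xt where xt: "r = dist y xt" "xt \<in> refl_set (ball 0 1) x" using hr R2_def by auto
    obtain m where m: "norm m = 1" "x = norm x *\<^sub>R m" "xt = 2 *\<^sub>R m - x"
      using refl_char[OF nx xt(2)] by blast
    obtain z where z: "norm z = 1" "dist y z + dist z x \<le> dist y (2 *\<^sub>R m - x)"
      using seg_lemma[OF ny m(1) m(2) nx] by blast
    have "Inf S \<le> dist x z + dist z y" using z(1) Sbdd unfolding S_def by (intro cInf_lower) auto
    then show ?thesis using z(2) xt(1) m(3) by (simp add: dist_commute)
  qed
  have I1: "Inf S \<le> Inf R1" using R1ne R1b by (intro cInf_greatest) auto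
  have I2: "Inf S \<le> Inf R2" using R2ne R2b by (intro cInf_greatest) auto
  define M0 where "M0 = min (Inf R1) (Inf R2)"
  have SM0: "Inf S \<le> M0" using I1 I2 M0_def by simp
  have M0pos: "M0 > 0" using SM0 InfSpos by linarith
  have d0: "d \<ge> 0" using d_def by simp
  have mid: "w_metric (ball 0 1) x y \<le> s_metric (ball 0 1) x y"
    unfolding wdef sdef M0_def[symmetric] using SM0 InfSpos d0
    by (intro divide_left_mono) auto
  have up: "s_metric (ball 0 1) x y \<le> (1 + ru\<^sup>2) / (2 * sqrt (1 - 2 * ru + 2 * ru\<^sup>2)) * tanh (rho_ball x y / 2)"
  proof -
    have "d / Inf S \<le> d / (2 * A / (1 + ru))" using InfSpos posS by (intro divide_left_mono[OF InfS d0] mult_pos_pos)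
    also have "\<dots> = (1 + ru) / 2 * (d / A)" by simp
    also have "\<dots> \<le> (1 + ru\<^sup>2) / (2 * sqrt (1 - 2 * ru + 2 * ru\<^sup>2)) * (d / A)"
      using poly_up[of ru] assms Apos d0 by (intro mult_right_mono) auto
    finally show ?thesis unfolding sdef th .
  qed
  have low: "(1 + rl) / sqrt (5 + 2 * rl + rl\<^sup>2) * tanh (rho_ball x y / 2) \<le> w_metric (ball 0 1) x y"
  proof (cases "d = 0")
    case True
    then show ?thesis unfolding th wdef by simp
  next
    case False
    then have "x \<noteq> y" using d_def by simp
    then have bpos: "b > 0" using assms(8) a_def b_def by (metis norm_eq_zero norm_ge_zero order.not_eq_order_implies_strict order_antisym)
    define m where "m = y /\<^sub>R b"
    have m: "norm m = 1" "y = norm y *\<^sub>R m" using bpos unfolding m_def b_def by auto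
    have ys: "2 *\<^sub>R m - y \<in> refl_set (ball 0 1) y" using refl_mem[OF m ny] .
    define Mst where "Mst = dist x (2 *\<^sub>R m - y)"
    have "Inf R1 \<le> Mst" unfolding Mst_def R1_def using ys
      by (intro cInf_lower) (auto intro: bdd_belowI[of _ 0])
    then have M0st: "M0 \<le> Mst" unfolding M0_def by simp
    have Mstpos: "Mst > 0" using M0st M0pos by linarith
    have ym: "y = b *\<^sub>R m" using m(2) b_def by simp
    have ms: "2 *\<^sub>R m - y = (2 - b) *\<^sub>R m" unfolding ym by (simp add: algebra_simps)
    have Mst2: "Mst\<^sup>2 = (2-b)\<^sup>2 - 2*(2-b)*inner x m + a\<^sup>2"
      unfolding Mst_def ms dist_norm norm_minus_commute[of x] norm_sR_diff_sq m(1) a_def by simp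
    define t where "t = (if a = 0 then 0 else inner x y / (a * b))"
    have at: "a * t = inner x m" and abt: "a * b * t = inner x y"
    proof -
      have "a * t = inner x m \<and> a * b * t = inner x y"
      proof (cases "a = 0")
        case True then show ?thesis using a_def t_def by simp
      next
        case False then show ?thesis using bpos unfolding t_def m_def by (simp add: field_simps)
      qed
      then show "a * t = inner x m" "a * b * t = inner x y" by auto
    qed
    have tb: "\<bar>t\<bar> \<le> 1"
    proof (cases "a = 0")
      case True then show ?thesis using t_def by simp
    next
      case False
      then have "a > 0" using a_def by simp
      then show ?thesis using Cauchy_Schwarz_ineq2[of x y] bpos unfolding t_def a_def b_def
        by (simp add: abs_div divide_le_eq_1)
    qed
    have P: "(1+rl)\<^sup>2 * (a\<^sup>2 + (2-b)\<^sup>2 - 2*a*(2-b)*t) \<le> (5+2*rl+rl\<^sup>2) * (1 + a\<^sup>2*b\<^sup>2 - 2*a*b*t)"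
      using assms tb a_def b_def by (intro poly_low) auto
    have E1: "a\<^sup>2 + (2-b)\<^sup>2 - 2*a*(2-b)*t = Mst\<^sup>2" unfolding Mst2 at[symmetric] by (simp add: algebra_simps)
    have E2: "1 + a\<^sup>2*b\<^sup>2 - 2*a*b*t = A\<^sup>2" unfolding A_def Aof_sq[OF nx ny] abt[symmetric] a_def b_def by simp
    have K0: "(sqrt (5+2*rl+rl\<^sup>2))\<^sup>2 = 5+2*rl+rl\<^sup>2" using assms(2) by (intro real_sqrt_pow2) simp
    have "((1+rl) * Mst)\<^sup>2 = (1+rl)\<^sup>2 * (a\<^sup>2 + (2-b)\<^sup>2 - 2*a*(2-b)*t)" unfolding E1 power_mult_distrib ..
    also have "\<dots> \<le> (5+2*rl+rl\<^sup>2) * (1 + a\<^sup>2*b\<^sup>2 - 2*a*b*t)" by (rule P)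
    also have "\<dots> = (sqrt (5+2*rl+rl\<^sup>2) * A)\<^sup>2" unfolding E2 power_mult_distrib K0 ..
    finally have "((1+rl) * Mst)\<^sup>2 \<le> (sqrt (5+2*rl+rl\<^sup>2) * A)\<^sup>2" .
    have Kpos: "sqrt (5+2*rl+rl\<^sup>2) > 0" using assms(2) by (simp add: add_pos_nonneg)
    have pM: "(1+rl) * Mst \<le> sqrt (5+2*rl+rl\<^sup>2) * A"
      by (rule power2_le_imp_le[OF \<open>((1+rl) * Mst)\<^sup>2 \<le> _\<close>]) (use Kpos Apos in simp)
    have "(1 + rl) / sqrt (5 + 2 * rl + rl\<^sup>2) * Mst = ((1 + rl) * Mst) / sqrt (5 + 2 * rl + rl\<^sup>2)"
      by simp
    also have "\<dots> \<le> A" using pM Kpos by (simp only: pos_divide_le_eq mult.commute)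
    finally have kM: "(1 + rl) / sqrt (5 + 2 * rl + rl\<^sup>2) * Mst \<le> A" .
    have "(1 + rl) / sqrt (5 + 2 * rl + rl\<^sup>2) * (d / A) \<le> d / Mst"
    proof -
      have "(1 + rl) / sqrt (5 + 2 * rl + rl\<^sup>2) * (d / A) = ((1 + rl) / sqrt (5 + 2 * rl + rl\<^sup>2) * Mst) * d / (A * Mst)"
        using Mstpos Apos Kpos by (simp add: field_simps)
      also have "\<dots> \<le> A * d / (A * Mst)" using kM d0 Apos Mstpos
        by (intro divide_right_mono mult_right_mono) auto
      also have "\<dots> = d / Mst" using Apos by simp
      finally show ?thesis .
    qed
    also have "d / Mst \<le> d / M0" using M0st M0pos d0 by (intro divide_left_mono) auto
    finally show ?thesis unfolding th wdef M0_def .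
  qed
  show ?thesis using low mid up by blast
qed

end
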